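(* Let $m \ge 1$ and $n \ge 2m$ be integers. Then for every real $r$ with $|r|<1$, $$\int_{-1}^1 \frac{T_n(s)(1-s^2)^{m-\frac{1}{2}}}{s-r}\,ds = \pi(-1)^{m+1}\left(\frac{1}{2}\right)^{2m-1}\sum_{j=0}^{2m-1}(-1)^j\binom{2m-1}{j}T_{n+1-2m+2j}(r),$$ where the integral is a Cauchy principal-value integral.
   Context: $T_k$ denotes the Tchebyshev polynomial of the first kind, $T_k(s)=\cos(k\cos^{-1}s)$, $k=0,1,2,\dots$. The integral over $(-1,1)$ with the singular point $s=r\in(-1,1)$ is understood in the Cauchy principal-value sense. $\binom{a}{j}=\frac{a!}{j!(a-j)!}$. *)

theory Defs
  imports "HOL-Analysis.Analysis"
begin

definition cheb_T :: "nat \<Rightarrow> real \<Rightarrow> real" where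
  "cheb_T k s = cos (real k * arccos s)"

definition has_cpv_integral :: "(real \<Rightarrow> real) \<Rightarrow> real \<Rightarrow> real \<Rightarrow> real \<Rightarrow> real \<Rightarrow> bool" where
  "has_cpv_integral f a b c I \<longleftrightarrow>
     (\<forall>\<^sub>F e in at_right 0. f integrable_on {a..c-e} \<and> f integrable_on {c+e..b}) \<and>
     ((\<lambda>e. integral {a..c-e} f + integral {c+e..b} f) \<longlongrightarrow> I) (at_right 0)"

end

theory Submission
  imports Defs
begin
lemma cpv_add:
  assumes "has_cpv_integral f a b c I" "has_cpv_integral g a b c J"
  shows "has_cpv_integral (\<lambda>s. f s + g s) a b c (I + J)"
proof -
  have ev: "\<forall>\<^sub>F e in at_right 0. (f integrable_on {a..c-e} \<and> f integrable_on {c+e..b}) \<and>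
     (g integrable_on {a..c-e} \<and> g integrable_on {c+e..b})"
  proof -
    have e1: "\<forall>\<^sub>F e in at_right 0. (f integrable_on {a..c-e} \<and> f integrable_on {c+e..b})"
      using assms(1) unfolding has_cpv_integral_def by auto
    have e2: "\<forall>\<^sub>F e in at_right 0. (g integrable_on {a..c-e} \<and> g integrable_on {c+e..b})"
      using assms(2) unfolding has_cpv_integral_def by auto
    show ?thesis using eventually_conj[OF e1 e2] by simp
  qed
  have t: "((\<lambda>e. (integral {a..c-e} f + integral {c+e..b} f) + (integral {a..c-e} g + integral {c+e..b} g)) \<longlongrightarrow> I + J) (at_right 0)"
    using assms unfolding has_cpv_integral_def by (intro tendsto_add) auto
  show ?thesis unfolding has_cpv_integral_def
  proof
    show "\<forall>\<^sub>F e in at_right 0. (\<lambda>s. f s + g s) integrable_on {a..c - e} \<and> (\<lambda>s. f s + g s) integrable_on {c + e..b}"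
      using ev by eventually_elim (auto intro: integrable_add)
    show "((\<lambda>e. integral {a..c - e} (\<lambda>s. f s + g s) + integral {c + e..b} (\<lambda>s. f s + g s)) \<longlongrightarrow> I + J) (at_right 0)"
      using t ev by (subst tendsto_cong; auto elim!: eventually_mono simp: integral_add)
  qed
qed

lemma cpv_cmult:
  assumes "has_cpv_integral f a b c I"
  shows "has_cpv_integral (\<lambda>s. k * f s) a b c (k * I)"
proof -
  have ev: "\<forall>\<^sub>F e in at_right 0. (f integrable_on {a..c-e} \<and> f integrable_on {c+e..b})"
    using assms unfolding has_cpv_integral_def by auto
  have t: "((\<lambda>e. k * (integral {a..c-e} f + integral {c+e..b} f)) \<longlongrightarrow> k * I) (at_right 0)"
    using assms unfolding has_cpv_integral_def by (intro tendsto_mult) auto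
  show ?thesis unfolding has_cpv_integral_def
  proof
    show "\<forall>\<^sub>F e in at_right 0. (\<lambda>s. k * f s) integrable_on {a..c - e} \<and> (\<lambda>s. k * f s) integrable_on {c + e..b}"
      using ev by eventually_elim (auto intro: integrable_on_mult_right)
    show "((\<lambda>e. integral {a..c - e} (\<lambda>s. k * f s) + integral {c + e..b} (\<lambda>s. k * f s)) \<longlongrightarrow> k * I) (at_right 0)"
      using t by (simp add: distrib_left)
  qed
qed

lemma cpv_cong:
  assumes "has_cpv_integral f a b c I" "a \<le> c" "c \<le> b" "\<And>s. s \<in> {a..b} \<Longrightarrow> s \<noteq> c \<Longrightarrow> f s = g s" "I = J"
  shows "has_cpv_integral g a b c J"
proof -
  have pos: "\<forall>\<^sub>F e in at_right (0::real). e > 0" by (rule eventually_at_right_less)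
  have eqs: "integral {a..c-e} f = integral {a..c-e} g" "integral {c+e..b} f = integral {c+e..b} g"
     "f integrable_on {a..c-e} \<longleftrightarrow> g integrable_on {a..c-e}" "f integrable_on {c+e..b} \<longleftrightarrow> g integrable_on {c+e..b}"
    if "e > 0" for e
    using that assms(2,3) by (auto intro!: integral_cong integrable_cong assms(4))
  have A: "\<forall>\<^sub>F e in at_right 0. f integrable_on {a..c-e} \<and> f integrable_on {c+e..b}"
    and B: "((\<lambda>e. integral {a..c-e} f + integral {c+e..b} f) \<longlongrightarrow> I) (at_right 0)"
    using assms(1) unfolding has_cpv_integral_def by blast+
  show ?thesis unfolding has_cpv_integral_def assms(5)[symmetric]
  proof
    show "\<forall>\<^sub>F e in at_right 0. g integrable_on {a..c-e} \<and> g integrable_on {c+e..b}"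
      using A pos by eventually_elim (simp add: eqs)
    have "\<forall>\<^sub>F e in at_right 0. integral {a..c-e} f + integral {c+e..b} f = integral {a..c-e} g + integral {c+e..b} g"
      using pos by eventually_elim (simp add: eqs)
    thus "((\<lambda>e. integral {a..c-e} g + integral {c+e..b} g) \<longlongrightarrow> I) (at_right 0)"
      by (rule tendsto_cong[THEN iffD1, OF _ B])
  qed
qed

lemma cpv_cont:
  assumes "a < c" "c < b" "continuous_on {a..b} f"
  shows "has_cpv_integral f a b c (integral {a..b} f)"
proof -
  define \<Phi> where "\<Phi> x = integral {a..x} f" for x
  have int: "f integrable_on {a..b}" using assms by (intro integrable_continuous_real)
  have sub: "f integrable_on {x..y}" if "a \<le> x" "y \<le> b" for x y
    using assms(3) that by (intro integrable_continuous_real) (auto elim: continuous_on_subset)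
  have "continuous_on {a..b} \<Phi>" unfolding \<Phi>_def using int by (rule indefinite_integral_continuous_1)
  hence ic: "isCont \<Phi> c" using assms
    by (intro continuous_on_interior[of "{a..b}"]) (auto simp: interior_atLeastAtMost_real)
  have l1: "((\<lambda>e. \<Phi> (c - e)) \<longlongrightarrow> \<Phi> c) (at_right 0)"
    by (rule isCont_tendsto_compose[OF ic]) (auto intro!: tendsto_eq_intros)
  have l2: "((\<lambda>e. \<Phi> (c + e)) \<longlongrightarrow> \<Phi> c) (at_right 0)"
    by (rule isCont_tendsto_compose[OF ic]) (auto intro!: tendsto_eq_intros)
  have l: "((\<lambda>e. \<Phi> (c - e) + (\<Phi> b - \<Phi> (c + e))) \<longlongrightarrow> \<Phi> c + (\<Phi> b - \<Phi> c)) (at_right 0)"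
    by (intro tendsto_intros l1 l2)
  have ev: "\<forall>\<^sub>F e in at_right 0. e \<in> {0<..<min (c-a) (b-c)}"
    by (rule eventually_at_right_real) (use assms in auto)
  show ?thesis unfolding has_cpv_integral_def
  proof
    show "\<forall>\<^sub>F e in at_right 0. f integrable_on {a..c - e} \<and> f integrable_on {c + e..b}"
      using ev by eventually_elim (auto intro!: sub)
    have "\<forall>\<^sub>F e in at_right 0. \<Phi> (c - e) + (\<Phi> b - \<Phi> (c + e)) = integral {a..c - e} f + integral {c + e..b} f"
      using ev proof eventually_elim
      case (elim e)
      have "integral {a..c+e} f + integral {c+e..b} f = integral {a..b} f"
        by (rule Henstock_Kurzweil_Integration.integral_combine) (use elim int in auto)
      thus ?case unfolding \<Phi>_def by simp
    qed
    moreover have "\<Phi> c + (\<Phi> b - \<Phi> c) = integral {a..b} f" unfolding \<Phi>_def by simp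
    ultimately show "((\<lambda>e. integral {a..c - e} f + integral {c + e..b} f) \<longlongrightarrow> integral {a..b} f) (at_right 0)"
      using tendsto_cong[THEN iffD1, OF _ l] by simp
  qed
qed
lemma cheb_0: "cheb_T 0 s = 1" by (simp add: cheb_T_def)
lemma cheb_1: "-1 \<le> s \<Longrightarrow> s \<le> 1 \<Longrightarrow> cheb_T 1 s = s" by (simp add: cheb_T_def)

lemma cheb_rec:
  assumes "-1 \<le> s" "s \<le> 1"
  shows "cheb_T (n+2) s = 2 * s * cheb_T (n+1) s - cheb_T n s"
proof -
  define t where "t = arccos s"
  have cs: "cos t = s" unfolding t_def using assms by simp
  have e1: "real (n+2) * t = real (n+1) * t + t" by (simp add: algebra_simps)
  have e2: "real n * t = real (n+1) * t - t" by (simp add: algebra_simps)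
  have "cos (real (n+2) * t) = 2 * cos t * cos (real (n+1) * t) - cos (real n * t)"
    unfolding e1 e2 cos_add cos_diff by simp
  thus ?thesis unfolding cheb_T_def t_def[symmetric] cs .
qed

lemma cheb_sq:
  assumes "-1 \<le> s" "s \<le> 1"
  shows "(1 - s\<^sup>2) * cheb_T (n+2) s = (2 * cheb_T (n+2) s - cheb_T (n+4) s - cheb_T n s) / 4"
proof -
  have a: "cheb_T (n+4) s = 2 * s * cheb_T (n+3) s - cheb_T (n+2) s"
    using cheb_rec[OF assms, of "n+2"] by (simp add: eval_nat_numeral)
  have b: "cheb_T (n+3) s = 2 * s * cheb_T (n+2) s - cheb_T (n+1) s"
    using cheb_rec[OF assms, of "n+1"] by (simp add: eval_nat_numeral)
  have c: "cheb_T (n+2) s = 2 * s * cheb_T (n+1) s - cheb_T n s"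
    using cheb_rec[OF assms, of n] .
  show ?thesis unfolding a b using c by (simp add: algebra_simps power2_eq_square)
qed

lemma pascal_sum:
  fixes t :: "nat \<Rightarrow> real"
  shows "(\<Sum>j=0..Suc k. (-1)^j * real (Suc k choose j) * t (a + 2*j)) =
         (\<Sum>j=0..k. (-1)^j * real (k choose j) * t (a + 2*j)) - (\<Sum>j=0..k. (-1)^j * real (k choose j) * t (a + 2 + 2*j))"
proof -
  define h where "h j = (-1)^j * real (k choose j) * t (a + 2*j)" for j
  have "(\<Sum>j=0..Suc k. (-1)^j * real (Suc k choose j) * t (a + 2*j)) =
        t a + (\<Sum>j=0..k. (-1)^(Suc j) * real (Suc k choose Suc j) * t (a + 2*Suc j))"
    by (subst sum.atLeast0_atMost_Suc_shift) simp
  also have "(\<Sum>j=0..k. (-1)^(Suc j) * real (Suc k choose Suc j) * t (a + 2*Suc j)) =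
        (\<Sum>j=0..k. h (Suc j)) - (\<Sum>j=0..k. (-1)^j * real (k choose j) * t (a + 2 + 2*j))"
    unfolding h_def sum_subtractf[symmetric]
    by (rule sum.cong) (auto simp: algebra_simps)
  also have "(\<Sum>j=0..k. h (Suc j)) = (\<Sum>j=0..Suc k. h j) - h 0"
    by (subst sum.atLeast0_atMost_Suc_shift) simp
  also have "(\<Sum>j=0..Suc k. h j) = (\<Sum>j=0..k. h j)" by (simp add: h_def)
  finally show ?thesis by (simp add: h_def)
qed
lemma K_ftc:
  assumes G: "\<And>t. (G has_real_derivative -(cos (real n * t) * (sin t)\<^sup>2)) (at t)"
  shows "((\<lambda>s. cheb_T n s * sqrt (1 - s\<^sup>2)) has_integral (G 0 - G pi)) {-1..1}"
proof -
  have cG: "continuous_on UNIV G"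
    using G by (meson DERIV_isCont continuous_at_imp_continuous_on)
  have cont: "continuous_on {-1..1} (\<lambda>s. G (arccos s))"
    by (rule continuous_on_compose2[OF cG]) (auto intro!: continuous_intros)
  have der: "((\<lambda>s. G (arccos s)) has_vector_derivative cheb_T n s * sqrt (1 - s\<^sup>2)) (at s)"
    if "s \<in> {-1<..<1}" for s
  proof -
    from that have s: "-1 < s" "s < 1" by auto
    have q: "sqrt (1 - s\<^sup>2) > 0" using s by (simp add: abs_square_less_1)
    have "((\<lambda>s. G (arccos s)) has_real_derivative
          -(cos (real n * arccos s) * (sin (arccos s))\<^sup>2) * inverse (- sqrt (1 - s\<^sup>2))) (at s)"
      by (rule DERIV_chain2[OF G DERIV_arccos]) (use s in auto)
    moreover have "-(cos (real n * arccos s) * (sin (arccos s))\<^sup>2) * inverse (- sqrt (1 - s\<^sup>2))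
       = cheb_T n s * sqrt (1 - s\<^sup>2)"
    proof -
      have "sin (arccos s) = sqrt (1 - s\<^sup>2)" using s by (simp add: sin_arccos)
      moreover have "-(c * (sqrt (1 - s\<^sup>2))\<^sup>2) * inverse (- sqrt (1 - s\<^sup>2)) = c * sqrt (1 - s\<^sup>2)" for c
        using q by (simp add: power2_eq_square field_simps)
      ultimately show ?thesis by (simp add: cheb_T_def)
    qed
    ultimately show ?thesis by (simp add: has_real_derivative_iff_has_vector_derivative)
  qed
  have "((\<lambda>s. cheb_T n s * sqrt (1 - s\<^sup>2)) has_integral (G (arccos 1) - G (arccos (-1)))) {-1..1}"
    by (rule fundamental_theorem_of_calculus_interior[OF _ cont der]) auto
  thus ?thesis by simp
qed

lemma K_0: "((\<lambda>s. cheb_T 0 s * sqrt (1 - s\<^sup>2)) has_integral pi/2) {-1..1}"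
proof -
  define G :: "real \<Rightarrow> real" where "G t = -(t/2 - sin (2*t)/4)" for t
  have "(G has_real_derivative -(cos (real 0 * t) * (sin t)\<^sup>2)) (at t)" for t
  proof -
    have "(G has_real_derivative -(1/2 - cos (2*t) * 2 / 4)) (at t)"
      unfolding G_def by (auto intro!: derivative_eq_intros)
    moreover have "-(1/2 - cos (2*t) * 2 / 4) = -(cos (real 0 * t) * (sin t)\<^sup>2)"
      using cos_double_sin[of t] by (simp add: field_simps)
    ultimately show ?thesis by (rule DERIV_cong)
  qed
  from K_ftc[OF this] show ?thesis by (simp add: G_def)
qed

lemma K_1: "((\<lambda>s. cheb_T 1 s * sqrt (1 - s\<^sup>2)) has_integral 0) {-1..1}"
proof -
  define G :: "real \<Rightarrow> real" where "G t = -((sin t)^3/3)" for t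
  have "(G has_real_derivative -(cos (real 1 * t) * (sin t)\<^sup>2)) (at t)" for t
  proof -
    have "(G has_real_derivative -(real 3 * (sin t)^(3-1) * cos t / 3)) (at t)"
      unfolding G_def by (auto intro!: derivative_eq_intros)
    thus ?thesis by (simp add: algebra_simps)
  qed
  from K_ftc[OF this] show ?thesis by (simp add: G_def)
qed

lemma K_2: "((\<lambda>s. cheb_T 2 s * sqrt (1 - s\<^sup>2)) has_integral -pi/4) {-1..1}"
proof -
  define G :: "real \<Rightarrow> real" where "G t = -(sin (2*t)/4 - sin (4*t)/16 - t/4)" for t
  have "(G has_real_derivative -(cos (real 2 * t) * (sin t)\<^sup>2)) (at t)" for t
  proof -
    have "(G has_real_derivative -(cos (2*t) * 2/4 - cos (4*t) * 4/16 - 1/4)) (at t)"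
      unfolding G_def by (auto intro!: derivative_eq_intros)
    moreover have "-(cos (2*t) * 2/4 - cos (4*t) * 4/16 - 1/4) = -(cos (real 2 * t) * (sin t)\<^sup>2)"
    proof -
      have a: "cos (4*t) = 2 * (cos (2*t))\<^sup>2 - 1"
        using cos_double_cos[of "2*t"] by simp
      have b: "(sin t)\<^sup>2 = (1 - cos (2*t))/2" using cos_double_sin[of t] by simp
      show ?thesis unfolding a b by (simp add: power2_eq_square field_simps)
    qed
    ultimately show ?thesis by (rule DERIV_cong)
  qed
  from K_ftc[OF this] show ?thesis by (simp add: G_def)
qed
lemma K_big: "((\<lambda>s. cheb_T (m+3) s * sqrt (1 - s\<^sup>2)) has_integral 0) {-1..1}"
proof -
  define a b c where "a = real (m+3)" "b = real (m+5)" "c = real (m+1)"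
  have pos: "a > 0" "b > 0" "c > 0" unfolding a_b_c_def by auto
  define G :: "real \<Rightarrow> real" where "G t = -(sin (a * t)/(2*a) - sin (b * t)/(4*b) - sin (c * t)/(4*c))" for t
  have "(G has_real_derivative -(cos (real (m+3) * t) * (sin t)\<^sup>2)) (at t)" for t
  proof -
    have "(G has_real_derivative -(cos (a * t) * a/(2*a) - cos (b * t) * b/(4*b) - cos (c * t) * c/(4*c))) (at t)"
      unfolding G_def by (auto intro!: derivative_eq_intros)
    moreover have "-(cos (a * t) * a/(2*a) - cos (b * t) * b/(4*b) - cos (c * t) * c/(4*c)) =
         -(cos (real (m+3) * t) * (sin t)\<^sup>2)"
    proof -
      have e: "b * t = a * t + 2*t" "c * t = a * t - 2*t" unfolding a_b_c_def by (auto simp: algebra_simps)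
      have s: "(sin t)\<^sup>2 = (1 - cos (2*t))/2" using cos_double_sin[of t] by simp
      show ?thesis unfolding e s cos_add cos_diff a_b_c_def(1)[symmetric] using pos
        by (simp add: field_simps)
    qed
    ultimately show ?thesis by (rule DERIV_cong)
  qed
  from K_ftc[OF this] have "((\<lambda>s. cheb_T (m+3) s * sqrt (1 - s\<^sup>2)) has_integral (G 0 - G pi)) {-1..1}" .
  moreover have "G 0 - G pi = 0"
  proof -
    have "sin (a * pi) = 0" "sin (b * pi) = 0" "sin (c * pi) = 0" unfolding a_b_c_def
      by (simp_all only: sin_npi)
    thus ?thesis unfolding G_def by simp
  qed
  ultimately show ?thesis by simp
qed
lemma alg_id:
  fixes q p s r :: real
  assumes "q\<^sup>2 = 1 - s\<^sup>2" "p\<^sup>2 = 1 - r\<^sup>2"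
  shows "-(s+r)*(1 - r * s + p * q)*(s-r) + p*(r * q + p * s)*(s-r) = q\<^sup>2*(1 - r * s + p * q) - p * q*(1 - r * s + p * q)"
  using assms by algebra

lemma P_deriv:
  fixes r s :: real
  defines "p \<equiv> sqrt (1 - r\<^sup>2)"
  assumes r: "\<bar>r\<bar> < 1" and s: "-1 < s" "s < 1" "s \<noteq> r"
  shows "((\<lambda>s. sqrt (1 - s\<^sup>2) - r * arcsin s - p * ln (1 - r * s + p * sqrt (1 - s\<^sup>2)))
          has_real_derivative (sqrt (1 - s\<^sup>2) / (s - r) - p / (s - r))) (at s)"
proof -
  define q where "q = sqrt (1 - s\<^sup>2)"
  have s2: "s\<^sup>2 < 1" using s by (simp add: abs_square_less_1)
  have r2: "r\<^sup>2 < 1" using r by (simp add: abs_square_less_1)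
  have qpos: "q > 0" unfolding q_def using s2 by simp
  have ppos: "p > 0" unfolding p_def using r2 by simp
  have qq: "q\<^sup>2 = 1 - s\<^sup>2" unfolding q_def using s2 by simp
  have pp: "p\<^sup>2 = 1 - r\<^sup>2" unfolding p_def using r2 by simp
  have rs: "r * s < 1"
  proof -
    have "\<bar>r * s\<bar> < 1" using r s by (simp add: abs_mult abs_less_iff) (smt (verit) mult_le_one mult_minus_left mult_minus_right mult_nonneg_nonneg mult_le_cancel_left1 mult_less_cancel_left1)
    thus ?thesis by simp
  qed
  have Npos: "1 - r * s + p * q > 0" using rs ppos qpos by (smt (verit) mult_pos_pos)
  have d1: "((\<lambda>s. sqrt (1 - s\<^sup>2)) has_real_derivative (-s/q)) (at s)"
    unfolding q_def using s2 by (auto intro!: derivative_eq_intros simp: field_simps power2_eq_square)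
  have d2: "(arcsin has_real_derivative (1/q)) (at s)"
    unfolding q_def using DERIV_arcsin[of s] s by (simp add: inverse_eq_divide)
  have d3: "((\<lambda>s. 1 - r * s + p * sqrt (1 - s\<^sup>2)) has_real_derivative (-r + p*(-s/q))) (at s)"
    using s2 by (auto intro!: derivative_eq_intros simp: q_def inverse_eq_divide)
  have d4: "((\<lambda>s. ln (1 - r * s + p * sqrt (1 - s\<^sup>2))) has_real_derivative (1/(1 - r * s + p * q) * (-r + p*(-s/q)))) (at s)"
  proof -
    have "DERIV ln (1 - r * s + p * sqrt (1 - s\<^sup>2)) :> 1/(1 - r * s + p * sqrt (1 - s\<^sup>2))"
      by (rule DERIV_ln_divide) (use Npos q_def in simp)
    from DERIV_chain2[OF this d3] show ?thesis unfolding q_def .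
  qed
  have d: "((\<lambda>s. sqrt (1 - s\<^sup>2) - r * arcsin s - p * ln (1 - r * s + p * sqrt (1 - s\<^sup>2)))
          has_real_derivative (-s/q - r * (1/q) - p * (1/(1 - r * s + p * q) * (-r + p*(-s/q))))) (at s)"
    by (intro DERIV_diff DERIV_cmult d1 d2 d4)
  have sr: "s - r \<noteq> 0" using s by simp
  have "-s/q - r * (1/q) - p * (1/(1 - r * s + p * q) * (-r + p*(-s/q))) = q / (s - r) - p / (s - r)"
  proof -
    define N where "N = 1 - r * s + p * q"
    have N0: "N \<noteq> 0" using Npos N_def by simp
    have q0: "q \<noteq> 0" using qpos by simp
    have "(-s/q - r * (1/q) - p * (1/N * (-r + p*(-s/q)))) * (q * N * (s - r))
      = -(s+r)*N*(s-r) + p*(r * q + p * s)*(s-r)"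
      using q0 N0 sr by (simp add: field_simps)
    also have "\<dots> = q\<^sup>2*N - p * q*N" unfolding N_def by (rule alg_id[OF qq pp])
    also have "\<dots> = (q / (s - r) - p / (s - r)) * (q * N * (s - r))"
    proof -
      have "(q / (s - r) - p / (s - r)) * (s - r) = q - p"
        using sr by (simp add: divide_simps)
      hence "(q / (s - r) - p / (s - r)) * (q * N * (s - r)) = (q - p) * (q * N)"
        by (metis mult.commute mult.left_commute)
      thus ?thesis by (simp add: power2_eq_square algebra_simps)
    qed
    finally show ?thesis using q0 N0 sr unfolding N_def[symmetric] by simp
  qed
  with d show ?thesis unfolding q_def by simp
qed

lemma J0:
  fixes r :: real
  assumes r: "\<bar>r\<bar> < 1"
  shows "has_cpv_integral (\<lambda>s. sqrt (1 - s\<^sup>2) / (s - r)) (-1) 1 r (-pi * r)"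
proof -
  define p where "p = sqrt (1 - r\<^sup>2)"
  define P where "P s = sqrt (1 - s\<^sup>2) - r * arcsin s - p * ln (1 - r * s + p * sqrt (1 - s\<^sup>2))" for s
  have r2: "r\<^sup>2 < 1" using r by (simp add: abs_square_less_1)
  have ppos: "p > 0" unfolding p_def using r2 by simp
  have Npos: "1 - r * s + p * sqrt (1 - s\<^sup>2) > 0" if "s \<in> {-1..1}" for s
  proof -
    have "\<bar>r * s\<bar> < 1" using r that by (auto simp: abs_mult intro: le_less_trans[OF mult_left_le[of "\<bar>s\<bar>" "\<bar>r\<bar>"]])
    moreover have "p * sqrt (1 - s\<^sup>2) \<ge> 0" using ppos that by (auto simp: abs_square_le_1 intro!: mult_nonneg_nonneg)
    ultimately show ?thesis by linarith
  qed
  have Pc: "continuous_on {-1..1} P" unfolding P_def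
    by (intro continuous_intros continuous_on_arcsin) (use Npos in \<open>auto simp: abs_square_le_1 less_imp_neq[symmetric]\<close>)
  have dP: "(P has_real_derivative (sqrt (1 - s\<^sup>2) / (s - r) - p / (s - r))) (at s)"
    if "-1 < s" "s < 1" "s \<noteq> r" for s
    unfolding P_def p_def by (rule P_deriv[OF r that])
  have rl: "-1 < r" "r < 1" using r by auto
  have left: "((\<lambda>s. sqrt (1 - s\<^sup>2) / (s - r)) has_integral
     (P (r - e) + p * ln e) - (P (-1) + p * ln (r + 1))) {-1..r-e}" if e: "0 < e" "e < r + 1" for e
  proof -
    have "((\<lambda>s. sqrt (1 - s\<^sup>2) / (s - r)) has_integral
      (P (r - e) + p * ln (r - (r - e))) - (P (-1) + p * ln (r - -1))) {-1..r-e}"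
    proof (rule fundamental_theorem_of_calculus_interior)
      show "-1 \<le> r - e" using e by simp
      show "continuous_on {-1..r-e} (\<lambda>s. P s + p * ln (r - s))"
        using e rl by (intro continuous_intros continuous_on_subset[OF Pc]) auto
      fix s assume s: "s \<in> {-1<..<r-e}"
      have "((\<lambda>s. P s + p * ln (r - s)) has_real_derivative
         (sqrt (1 - s\<^sup>2) / (s - r) - p / (s - r)) + p * (1 / (r - s) * (0 - 1))) (at s)"
        using s e rl
        by (intro DERIV_add DERIV_cmult dP DERIV_chain2[OF DERIV_ln_divide] DERIV_diff DERIV_const DERIV_ident) auto
      moreover have "(sqrt (1 - s\<^sup>2) / (s - r) - p / (s - r)) + p * (1 / (r - s) * (0 - 1)) = sqrt (1 - s\<^sup>2) / (s - r)"
      proof -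
        have "1 / (r - s) * (0 - 1) = 1 / (s - r)"
          by (metis diff_0 minus_diff_eq minus_divide_right mult.right_neutral mult_minus_right)
        thus ?thesis by simp
      qed
      ultimately have "((\<lambda>s. P s + p * ln (r - s)) has_real_derivative sqrt (1 - s\<^sup>2) / (s - r)) (at s)"
        by (rule DERIV_cong)
      thus "((\<lambda>s. P s + p * ln (r - s)) has_vector_derivative sqrt (1 - s\<^sup>2) / (s - r)) (at s)"
        by (simp add: has_real_derivative_iff_has_vector_derivative)
    qed
    thus ?thesis by (simp add: add.commute)
  qed
  have right: "((\<lambda>s. sqrt (1 - s\<^sup>2) / (s - r)) has_integral
     (P 1 + p * ln (1 - r)) - (P (r + e) + p * ln e)) {r+e..1}" if e: "0 < e" "e < 1 - r" for e
  proof -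
    have "((\<lambda>s. sqrt (1 - s\<^sup>2) / (s - r)) has_integral
      (P 1 + p * ln (1 - r)) - (P (r + e) + p * ln ((r + e) - r))) {r+e..1}"
    proof (rule fundamental_theorem_of_calculus_interior)
      show "r + e \<le> 1" using e by simp
      show "continuous_on {r+e..1} (\<lambda>s. P s + p * ln (s - r))"
        using e rl by (intro continuous_intros continuous_on_subset[OF Pc]) auto
      fix s assume s: "s \<in> {r+e<..<1}"
      have "((\<lambda>s. P s + p * ln (s - r)) has_real_derivative
         (sqrt (1 - s\<^sup>2) / (s - r) - p / (s - r)) + p * (1 / (s - r) * (1 - 0))) (at s)"
        using s e rl
        by (intro DERIV_add DERIV_cmult dP DERIV_chain2[OF DERIV_ln_divide] DERIV_diff DERIV_const DERIV_ident) auto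
      moreover have "(sqrt (1 - s\<^sup>2) / (s - r) - p / (s - r)) + p * (1 / (s - r) * (1 - 0)) = sqrt (1 - s\<^sup>2) / (s - r)"
        by simp
      ultimately have "((\<lambda>s. P s + p * ln (s - r)) has_real_derivative sqrt (1 - s\<^sup>2) / (s - r)) (at s)"
        by (rule DERIV_cong)
      thus "((\<lambda>s. P s + p * ln (s - r)) has_vector_derivative sqrt (1 - s\<^sup>2) / (s - r)) (at s)"
        by (simp add: has_real_derivative_iff_has_vector_derivative)
    qed
    thus ?thesis by simp
  qed
  have ev: "\<forall>\<^sub>F e in at_right 0. e \<in> {0<..<min (r + 1) (1 - r)}"
    by (rule eventually_at_right_real) (use rl in auto)
  have icP: "isCont P r" using Pc rl
    by (intro continuous_on_interior[of "{-1..1}"]) (auto simp: interior_atLeastAtMost_real)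
  have l1: "((\<lambda>e. P (r - e)) \<longlongrightarrow> P r) (at_right 0)"
    by (rule isCont_tendsto_compose[OF icP]) (auto intro!: tendsto_eq_intros)
  have l2: "((\<lambda>e. P (r + e)) \<longlongrightarrow> P r) (at_right 0)"
    by (rule isCont_tendsto_compose[OF icP]) (auto intro!: tendsto_eq_intros)
  have l: "((\<lambda>e. P (r - e) - P (r + e) + ((P 1 + p * ln (1 - r)) - (P (-1) + p * ln (r + 1))))
     \<longlongrightarrow> P r - P r + ((P 1 + p * ln (1 - r)) - (P (-1) + p * ln (r + 1)))) (at_right 0)"
    by (intro tendsto_intros l1 l2)
  have C: "P r - P r + ((P 1 + p * ln (1 - r)) - (P (-1) + p * ln (r + 1))) = -pi * r"
    unfolding P_def by (simp add: algebra_simps)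
  show ?thesis unfolding has_cpv_integral_def
  proof
    show "\<forall>\<^sub>F e in at_right 0. (\<lambda>s. sqrt (1 - s\<^sup>2) / (s - r)) integrable_on {-1..r - e} \<and>
        (\<lambda>s. sqrt (1 - s\<^sup>2) / (s - r)) integrable_on {r + e..1}"
      using ev by eventually_elim (use left right in \<open>auto intro: has_integral_integrable\<close>)
    have "\<forall>\<^sub>F e in at_right 0. P (r - e) - P (r + e) + ((P 1 + p * ln (1 - r)) - (P (-1) + p * ln (r + 1))) =
       integral {-1..r - e} (\<lambda>s. sqrt (1 - s\<^sup>2) / (s - r)) + integral {r + e..1} (\<lambda>s. sqrt (1 - s\<^sup>2) / (s - r))"
      using ev proof eventually_elim
      case (elim e)
      hence "integral {-1..r - e} (\<lambda>s. sqrt (1 - s\<^sup>2) / (s - r)) = (P (r - e) + p * ln e) - (P (-1) + p * ln (r + 1))"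
        "integral {r + e..1} (\<lambda>s. sqrt (1 - s\<^sup>2) / (s - r)) = (P 1 + p * ln (1 - r)) - (P (r + e) + p * ln e)"
        using left right by (auto intro!: integral_unique)
      thus ?case by simp
    qed
    from tendsto_cong[THEN iffD1, OF this l]
    show "((\<lambda>e. integral {-1..r - e} (\<lambda>s. sqrt (1 - s\<^sup>2) / (s - r)) + integral {r + e..1} (\<lambda>s. sqrt (1 - s\<^sup>2) / (s - r))) \<longlongrightarrow> -pi * r) (at_right 0)"
      unfolding C .
  qed
qed

lemma cheb_sqrt_cont: "continuous_on {-1..1} (\<lambda>s. cheb_T n s * sqrt (1 - s\<^sup>2))"
  unfolding cheb_T_def by (intro continuous_intros continuous_on_arccos) auto

lemma Kcpv:
  assumes r: "\<bar>r\<bar> < 1" and K: "((\<lambda>s. cheb_T n s * sqrt (1 - s\<^sup>2)) has_integral k) {-1..1}"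
  shows "has_cpv_integral (\<lambda>s. cheb_T n s * sqrt (1 - s\<^sup>2)) (-1) 1 r k"
proof -
  have "has_cpv_integral (\<lambda>s. cheb_T n s * sqrt (1 - s\<^sup>2)) (-1) 1 r (integral {-1..1} (\<lambda>s. cheb_T n s * sqrt (1 - s\<^sup>2)))"
    using r by (intro cpv_cont cheb_sqrt_cont) auto
  moreover have "integral {-1..1} (\<lambda>s. cheb_T n s * sqrt (1 - s\<^sup>2)) = k" using K by (rule integral_unique)
  ultimately show ?thesis by simp
qed

lemma gen_step0: fixes A B d r :: real shows "d \<noteq> 0 \<Longrightarrow> 2*A + 2*r*(A/d) + (-1)*(B/d) = (2*(r+d)*A - B)/d"
  by (simp add: field_simps)
lemma gen_step: fixes A B x r :: real shows "x \<noteq> r \<Longrightarrow> 2*A + 2*r*(A/(x-r)) + (-1)*(B/(x-r)) = (2*x*A - B)/(x-r)"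
  using gen_step0[of "x - r" A r B] by simp

lemma gen_one0: fixes Q d r :: real shows "d \<noteq> 0 \<Longrightarrow> Q + r*(Q/d) = (r+d)*Q/d"
  by (simp add: field_simps)
lemma gen_one: fixes Q x r :: real shows "x \<noteq> r \<Longrightarrow> Q + r*(Q/(x-r)) = x*Q/(x-r)"
  using gen_one0[of "x - r" Q r] by simp

lemma J_step:
  assumes r: "\<bar>r\<bar> < 1"
    and A: "has_cpv_integral (\<lambda>s. cheb_T (n+1) s * sqrt (1 - s\<^sup>2) / (s - r)) (-1) 1 r a"
    and B: "has_cpv_integral (\<lambda>s. cheb_T n s * sqrt (1 - s\<^sup>2) / (s - r)) (-1) 1 r b"
    and K: "((\<lambda>s. cheb_T (n+1) s * sqrt (1 - s\<^sup>2)) has_integral k) {-1..1}"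
  shows "has_cpv_integral (\<lambda>s. cheb_T (n+2) s * sqrt (1 - s\<^sup>2) / (s - r)) (-1) 1 r (2 * k + 2 * r * a - b)"
proof -
  have "has_cpv_integral (\<lambda>s. 2 * (cheb_T (n+1) s * sqrt (1 - s\<^sup>2)) + (2 * r) * (cheb_T (n+1) s * sqrt (1 - s\<^sup>2) / (s - r))
      + (-1) * (cheb_T n s * sqrt (1 - s\<^sup>2) / (s - r))) (-1) 1 r (2 * k + (2 * r) * a + (-1) * b)"
    by (intro cpv_add cpv_cmult Kcpv[OF r K] A B)
  thus ?thesis
  proof (rule cpv_cong)
    show "-1 \<le> r" "r \<le> 1" using r by auto
    show "2 * k + 2 * r * a + -1 * b = 2 * k + 2 * r * a - b" by simp
    fix s :: real assume s: "s \<in> {-1..1}" "s \<noteq> r"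
    have sr: "s - r \<noteq> 0" using s by simp
    have rec: "cheb_T (n+2) s = 2 * s * cheb_T (n+1) s - cheb_T n s" using s by (intro cheb_rec) auto
    show "2 * (cheb_T (n+1) s * sqrt (1 - s\<^sup>2)) + (2 * r) * (cheb_T (n+1) s * sqrt (1 - s\<^sup>2) / (s - r))
      + (-1) * (cheb_T n s * sqrt (1 - s\<^sup>2) / (s - r)) = cheb_T (n+2) s * sqrt (1 - s\<^sup>2) / (s - r)"
      unfolding rec using gen_step[of s r "cheb_T (n+1) s * sqrt (1 - s\<^sup>2)" "cheb_T n s * sqrt (1 - s\<^sup>2)"] s
      by (simp add: algebra_simps)
  qed
qed

definition Jv :: "real \<Rightarrow> nat \<Rightarrow> real" where
  "Jv r n = pi / 2 * (cheb_T (n - 1) r - cheb_T (n + 1) r)"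

lemma J_all:
  assumes r: "\<bar>r\<bar> < 1" and n: "n \<ge> 2"
  shows "has_cpv_integral (\<lambda>s. cheb_T n s * sqrt (1 - s\<^sup>2) / (s - r)) (-1) 1 r (Jv r n)"
proof -
  have r1: "-1 \<le> r" "r \<le> 1" using r by auto
  have T0: "cheb_T 0 r = 1" by (rule cheb_0)
  have T1: "cheb_T 1 r = r" using r1 by (rule cheb_1)
  have R2: "cheb_T 2 r = 2 * r * cheb_T 1 r - cheb_T 0 r" using cheb_rec[OF r1, of 0] by (simp add: eval_nat_numeral)
  have R3: "cheb_T 3 r = 2 * r * cheb_T 2 r - cheb_T 1 r" using cheb_rec[OF r1, of 1] by (simp add: eval_nat_numeral)
  have R4: "cheb_T 4 r = 2 * r * cheb_T 3 r - cheb_T 2 r" using cheb_rec[OF r1, of 2] by (simp add: eval_nat_numeral)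
  have T2: "cheb_T 2 r = 2 * r\<^sup>2 - 1" unfolding R2 T0 T1 by (simp add: power2_eq_square)
  have T3: "cheb_T 3 r = 4 * r^3 - 3 * r" unfolding R3 T2 T1 by (simp add: power2_eq_square power3_eq_cube algebra_simps)
  have T4: "cheb_T 4 r = 8 * r^4 - 8 * r\<^sup>2 + 1" unfolding R4 T3 T2
    by (simp add: power2_eq_square power3_eq_cube power4_eq_xxxx algebra_simps)
  define f where "f n = (\<lambda>s. cheb_T n s * sqrt (1 - s\<^sup>2) / (s - r))" for n
  have J0': "has_cpv_integral (f 0) (-1) 1 r (-pi * r)"
    unfolding f_def by (rule cpv_cong[OF J0[OF r]]) (use r1 in \<open>auto simp: cheb_0\<close>)
  have J1: "has_cpv_integral (f 1) (-1) 1 r (pi/2 - pi * r\<^sup>2)"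
  proof -
    have "has_cpv_integral (\<lambda>s. cheb_T 0 s * sqrt (1 - s\<^sup>2) + r * (sqrt (1 - s\<^sup>2) / (s - r))) (-1) 1 r (pi/2 + r * (-pi * r))"
      by (intro cpv_add cpv_cmult Kcpv[OF r] K_0 J0[OF r])
    thus ?thesis unfolding f_def
    proof (rule cpv_cong)
      show "-1 \<le> r" "r \<le> 1" using r1 by auto
      show "pi/2 + r * (-pi * r) = pi/2 - pi * r\<^sup>2" by (simp add: power2_eq_square)
      fix s :: real assume s: "s \<in> {-1..1}" "s \<noteq> r"
      have sr: "s - r \<noteq> 0" using s by simp
      show "cheb_T 0 s * sqrt (1 - s\<^sup>2) + r * (sqrt (1 - s\<^sup>2) / (s - r)) = cheb_T 1 s * sqrt (1 - s\<^sup>2) / (s - r)"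
      proof -
        have "cheb_T 1 s = s" using s by (intro cheb_1) auto
        thus ?thesis using gen_one[of s r "sqrt (1 - s\<^sup>2)"] s by (simp add: cheb_0)
      qed
    qed
  qed
  have J2: "has_cpv_integral (f 2) (-1) 1 r (Jv r 2)"
  proof -
    have "has_cpv_integral (f (0+2)) (-1) 1 r (2 * 0 + 2 * r * (pi/2 - pi * r\<^sup>2) - (-pi * r))"
      unfolding f_def by (rule J_step) (use r J1 J0' K_1 in \<open>simp_all add: f_def\<close>)
    moreover have "2 * 0 + 2 * r * (pi/2 - pi * r\<^sup>2) - (-pi * r) = Jv r 2"
    proof -
      have e: "(2::nat) - 1 = 1" "(2::nat) + 1 = 3" by simp_all
      show ?thesis unfolding Jv_def e T1 T3 by (simp add: algebra_simps power2_eq_square power3_eq_cube)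
    qed
    ultimately show ?thesis by (simp add: eval_nat_numeral)
  qed
  have J3: "has_cpv_integral (f 3) (-1) 1 r (Jv r 3)"
  proof -
    have "has_cpv_integral (f (1+2)) (-1) 1 r (2 * (-pi/4) + 2 * r * Jv r 2 - (pi/2 - pi * r\<^sup>2))"
      unfolding f_def by (rule J_step) (use r J2 J1 K_2 in \<open>simp_all add: f_def eval_nat_numeral\<close>)
    moreover have "2 * (-pi/4) + 2 * r * Jv r 2 - (pi/2 - pi * r\<^sup>2) = Jv r 3"
    proof -
      have e: "(2::nat) - 1 = 1" "(2::nat) + 1 = 3" "(3::nat) - 1 = 2" "(3::nat) + 1 = 4" by simp_all
      show ?thesis unfolding Jv_def e T1 T2 T3 T4 by (simp add: algebra_simps power2_eq_square power3_eq_cube power4_eq_xxxx)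
    qed
    ultimately show ?thesis by (simp add: eval_nat_numeral)
  qed
  have "has_cpv_integral (f (k+2)) (-1) 1 r (Jv r (k+2)) \<and> has_cpv_integral (f (k+3)) (-1) 1 r (Jv r (k+3))" for k
  proof (induction k)
    case 0 thus ?case using J2 J3 by (simp add: eval_nat_numeral)
  next
    case (Suc k)
    have e: "k + 2 + 1 = k + 3" "k + 2 + 2 = k + 4" "Suc k + 2 = k + 3" "Suc k + 3 = k + 4" by simp_all
    have A: "has_cpv_integral (f (k+2)) (-1) 1 r (Jv r (k+2))" using Suc.IH by blast
    have B: "has_cpv_integral (f (k+2+1)) (-1) 1 r (Jv r (k+3))" using Suc.IH unfolding e by blast
    have "has_cpv_integral (f (k+2+2)) (-1) 1 r (2 * 0 + 2 * r * Jv r (k+3) - Jv r (k+2))"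
      unfolding f_def by (rule J_step[OF r B[unfolded f_def] A[unfolded f_def] K_big[of k, folded e(1)]])
    moreover have "2 * 0 + 2 * r * Jv r (k+3) - Jv r (k+2) = Jv r (k+4)"
    proof -
      have a: "cheb_T (k+3) r = 2 * r * cheb_T (k+2) r - cheb_T (k+1) r"
        using cheb_rec[OF r1, of "k+1"] by (simp add: eval_nat_numeral)
      have b: "cheb_T (k+5) r = 2 * r * cheb_T (k+4) r - cheb_T (k+3) r"
        using cheb_rec[OF r1, of "k+3"] by (simp add: eval_nat_numeral)
      have c: "k + 4 - 1 = k + 3" "k + 3 - 1 = k + 2" "k + 2 - 1 = k + 1" "k + 4 + 1 = k + 5" "k + 3 + 1 = k + 4" "k + 2 + 1 = k + 3" by simp_all
      show ?thesis unfolding Jv_def c b a by (simp add: algebra_simps)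
    qed
    ultimately have "has_cpv_integral (f (k+4)) (-1) 1 r (Jv r (k+4))" unfolding e by simp
    with B show ?case unfolding e by blast
  qed
  moreover obtain k where "n = k + 2" using n by (metis add.commute le_Suc_ex)
  ultimately show ?thesis unfolding f_def by blast
qed

lemma powr_base: "0 \<le> (x::real) \<Longrightarrow> x powr (real 1 - 1/2) = sqrt x"
  by (simp add: powr_half_sqrt)

lemma powr_step: "0 \<le> (x::real) \<Longrightarrow> x powr (real (Suc m) - 1/2) = x * x powr (real m - 1/2)"
proof -
  assume x: "0 \<le> x"
  have "real (Suc m) - 1/2 = 1 + (real m - 1/2)" by simp
  hence "x powr (real (Suc m) - 1/2) = x powr 1 * x powr (real m - 1/2)" by (simp only: powr_add)
  thus ?thesis using x by simp
qed

lemma gen3: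
  fixes a b c y X d :: real
  assumes "y * a = (2*a - b - c)/4" "d \<noteq> 0"
  shows "a * (y * X) / d = 1/2 * (a * X / d) + (-1/4) * (b * X / d) + (-1/4) * (c * X / d)"
proof -
  have "a * (y * X) / d = (y * a) * X / d" by (simp add: mult_ac)
  also have "\<dots> = ((2*a - b - c)/4) * X / d" by (simp only: assms(1))
  also have "\<dots> = 1/2 * (a * X / d) + (-1/4) * (b * X / d) + (-1/4) * (c * X / d)"
    using assms(2) by (simp add: field_simps)
  finally show ?thesis .
qed

theorem mainTheorem1:
  fixes m n :: nat and r :: real
  assumes "m \<ge> 1" and "n \<ge> 2 * m" and "\<bar>r\<bar> < 1"
  shows "has_cpv_integral
           (\<lambda>s. cheb_T n s * (1 - s\<^sup>2) powr (real m - 1/2) / (s - r)) (-1) 1 r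
           (pi * (-1) ^ (m + 1) * (1/2) ^ (2 * m - 1) *
             (\<Sum>j = 0..2 * m - 1. (-1) ^ j * real ((2 * m - 1) choose j) * cheb_T (n + 1 - 2 * m + 2 * j) r))"
proof -
  have r: "\<bar>r\<bar> < 1" by fact
  have r1: "-1 \<le> r" "r \<le> 1" using r by auto
  define S where "S k a = (\<Sum>j = 0..k. (-1) ^ j * real (k choose j) * cheb_T (a + 2 * j) r)" for k a
  define I where "I m n = (\<lambda>s. cheb_T n s * (1 - s\<^sup>2) powr (real m - 1/2) / (s - r))" for m n
  define R where "R m n = pi * (-1) ^ (m + 1) * (1/2) ^ (2 * m - 1) * S (2 * m - 1) (n + 1 - 2 * m)" for m n
  have Sp: "S (Suc k) a = S k a - S k (a + 2)" for k a
    unfolding S_def by (rule pascal_sum)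
  have S0: "S 0 a = cheb_T a r" for a unfolding S_def by simp
  have main: "\<forall>n. 2 * m \<le> n \<longrightarrow> has_cpv_integral (I m n) (-1) 1 r (R m n)"
    using assms(1)
  proof (induction m rule: nat_induct_at_least)
    case base
    show ?case
    proof (intro allI impI)
      fix n :: nat assume n: "2 * 1 \<le> n"
      have "has_cpv_integral (\<lambda>s. cheb_T n s * sqrt (1 - s\<^sup>2) / (s - r)) (-1) 1 r (Jv r n)"
        using J_all[OF r] n by simp
      thus "has_cpv_integral (I 1 n) (-1) 1 r (R 1 n)"
      proof (rule cpv_cong)
        show "-1 \<le> r" "r \<le> 1" by (rule r1)+
        fix s :: real assume "s \<in> {-1..1}" "s \<noteq> r"
        hence "\<bar>s\<bar> \<le> 1" by auto
        hence "0 \<le> 1 - s\<^sup>2" by (simp add: abs_square_le_1)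
        thus "cheb_T n s * sqrt (1 - s\<^sup>2) / (s - r) = I 1 n s"
          unfolding I_def by (simp only: powr_base)
      next
        have e: "2 * 1 - 1 = Suc 0" "n + 1 - 2 * 1 = n - 1" "n - 1 + 2 = n + 1" using n by simp_all
        show "Jv r n = R 1 n" unfolding R_def Jv_def e Sp S0 by simp
      qed
    qed
  next
    case (Suc m)
    show ?case
    proof (intro allI impI)
      fix n :: nat assume n: "2 * Suc m \<le> n"
      define k where "k = n - 2"
      have k: "n = k + 2" "2 * m \<le> k" using n unfolding k_def by simp_all
      have c1: "has_cpv_integral (I m (k+2)) (-1) 1 r (R m (k+2))" using Suc.IH[rule_format, of "k+2"] k by simp
      have c2: "has_cpv_integral (I m (k+4)) (-1) 1 r (R m (k+4))" using Suc.IH[rule_format, of "k+4"] k by simp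
      have c3: "has_cpv_integral (I m k) (-1) 1 r (R m k)" using Suc.IH[rule_format, of k] k by simp
      have "has_cpv_integral (\<lambda>s. 1/2 * I m (k+2) s + (-1/4) * I m (k+4) s + (-1/4) * I m k s) (-1) 1 r
         (1/2 * R m (k+2) + (-1/4) * R m (k+4) + (-1/4) * R m k)"
        by (intro cpv_add cpv_cmult c1 c2 c3)
      thus "has_cpv_integral (I (Suc m) n) (-1) 1 r (R (Suc m) n)"
      proof (rule cpv_cong)
        show "-1 \<le> r" "r \<le> 1" by (rule r1)+
        fix s :: real assume s: "s \<in> {-1..1}" "s \<noteq> r"
        hence "\<bar>s\<bar> \<le> 1" by auto
        hence x: "0 \<le> 1 - s\<^sup>2" by (simp add: abs_square_le_1)
        have sq: "(1 - s\<^sup>2) * cheb_T (k+2) s = (2 * cheb_T (k+2) s - cheb_T (k+4) s - cheb_T k s) / 4"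
          using s by (intro cheb_sq) auto
        show "1/2 * I m (k+2) s + (-1/4) * I m (k+4) s + (-1/4) * I m k s = I (Suc m) n s"
          unfolding I_def k(1) powr_step[OF x]
          by (rule gen3[OF sq, symmetric]) (use s in simp)
      next
        define a where "a = k + 1 - 2 * m"
        have e: "2 * Suc m - 1 = Suc (Suc (2 * m - 1))" "k + 2 + 1 - 2 * Suc m = a"
          "k + 2 + 1 - 2 * m = a + 2" "k + 4 + 1 - 2 * m = a + 4" "k + 1 - 2 * m = a" "a + 2 + 2 = a + 4"
          using k Suc.hyps unfolding a_def by simp_all
        have p: "(-1::real) ^ (Suc m + 1) = - ((-1) ^ (m + 1))" by simp
        have h: "(1/2::real) ^ (Suc (Suc (2 * m - 1))) = (1/2) ^ (2 * m - 1) * (1/4)"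
          by (simp add: power2_eq_square)
        show "1/2 * R m (k+2) + (-1/4) * R m (k+4) + (-1/4) * R m k = R (Suc m) n"
          unfolding R_def k(1) e Sp p h by (simp add: algebra_simps)
      qed
    qed
  qed
  thus ?thesis using assms(2) unfolding I_def R_def S_def by blast
qed

end
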